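(* Let $d_1<d_2<d_3$ be positive integers with $\gcd(d_1,d_2,d_3)=1$ forming a minimal generating set. Let $r=r(N)$ satisfy $r(N)\to\infty$ and $r(N)/N\to0$ as $N\to\infty$. Let $\mathbb M_{N,r}$ be the set of integer vectors $\mathbf e=(Nd_1+j_1,Nd_2+j_2,Nd_3+j_3)$ with $-r\le j_i\le r$, $\gcd(e_1,e_2,e_3)=1$, and $\{e_1,e_2,e_3\}$ a minimal generating set. Define $$K_{N,r}=\frac{\sum_{\mathbf e\in\mathbb M_{N,r}} C(\mathbf e)}{\sum_{\mathbf e\in\mathbb M_{N,r}}\sqrt{e_1e_2e_3}}.$$ Then $\liminf_{N\to\infty}K_{N,r(N)}\ge\sqrt3$. In particular the conjectured value $g_3=\sqrt{2}$ (for which $\lim K_{N,r}$ would equal $\sqrt{2!}$) is not the limit.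
   Context: $\mathsf S(e_1,e_2,e_3)=\{c_1e_1+c_2e_2+c_3e_3: c_i\in\mathbb Z_{\ge0}\}$. The conductor $C(\mathbf e)$ is the smallest integer $s$ such that every integer $\ge s$ lies in $\mathsf S(e_1,e_2,e_3)$. A set of positive integers is a minimal generating set if no element is a nonnegative integer combination of the others. *)

theory Defs
  imports "HOL-Analysis.Analysis" "HOL-Library.Liminf_Limsup"
begin

definition semigroup3 :: "int \<Rightarrow> int \<Rightarrow> int \<Rightarrow> int set" where
  "semigroup3 e1 e2 e3 =
     {c1 * e1 + c2 * e2 + c3 * e3 | c1 c2 c3. c1 \<ge> 0 \<and> c2 \<ge> 0 \<and> c3 \<ge> 0}"

definition conductor3 :: "int \<Rightarrow> int \<Rightarrow> int \<Rightarrow> int" where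
  "conductor3 e1 e2 e3 = (LEAST s. \<forall>n\<ge>s. n \<in> semigroup3 e1 e2 e3)"

definition min_gen_set :: "int set \<Rightarrow> bool" where
  "min_gen_set A \<longleftrightarrow> finite A \<and> (\<forall>a\<in>A. a > 0) \<and>
     (\<forall>a\<in>A. \<not> (\<exists>c. (\<forall>b\<in>A - {a}. c b \<ge> (0::int)) \<and> a = (\<Sum>b\<in>A - {a}. c b * b)))"

definition MNr :: "int \<Rightarrow> int \<Rightarrow> int \<Rightarrow> nat \<Rightarrow> real \<Rightarrow> (int \<times> int \<times> int) set" where
  "MNr d1 d2 d3 N r =
     {(e1, e2, e3) | e1 e2 e3.
        \<bar>real_of_int (e1 - int N * d1)\<bar> \<le> r \<and>
        \<bar>real_of_int (e2 - int N * d2)\<bar> \<le> r \<and>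
        \<bar>real_of_int (e3 - int N * d3)\<bar> \<le> r \<and>
        gcd e1 (gcd e2 e3) = 1 \<and> min_gen_set {e1, e2, e3}}"

definition KNr :: "int \<Rightarrow> int \<Rightarrow> int \<Rightarrow> nat \<Rightarrow> real \<Rightarrow> real" where
  "KNr d1 d2 d3 N r =
     (\<Sum>(e1, e2, e3)\<in>MNr d1 d2 d3 N r. real_of_int (conductor3 e1 e2 e3)) /
     (\<Sum>(e1, e2, e3)\<in>MNr d1 d2 d3 N r. sqrt (real_of_int (e1 * e2 * e3)))"

end

theory Submission
  imports Defs
begin


definition fv :: "int \<Rightarrow> int \<Rightarrow> nat \<Rightarrow> nat \<Rightarrow> int" where
  "fv b c y z = b * int y + c * int z"

definition prec :: "int \<Rightarrow> int \<Rightarrow> nat \<Rightarrow> nat \<Rightarrow> nat \<Rightarrow> nat \<Rightarrow> bool" where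
  "prec b c y z y' z' \<longleftrightarrow> fv b c y z < fv b c y' z' \<or> (fv b c y z = fv b c y' z' \<and> y < y')"

definition inA :: "int \<Rightarrow> int \<Rightarrow> int \<Rightarrow> nat \<Rightarrow> nat \<Rightarrow> bool" where
  "inA a b c y z \<longleftrightarrow> (\<forall>y' z'. fv b c y' z' mod a = fv b c y z mod a \<longrightarrow> \<not> prec b c y' z' y z)"

lemma alg_ineq:
  fixes m n P Q T :: int
  assumes "0 \<le> m" "m \<le> n" "m \<le> P" "0 \<le> Q" "P + Q - m \<le> T"
  shows "3 * (P * Q - m * n) \<le> T^2"
proof -
  have h0: "0 \<le> P + Q - m" using assms by linarith
  have h1: "(P + Q - m)^2 \<le> T^2" using power_mono[OF assms(5) h0] by simp
  have h2: "m * m \<le> m * n" using assms(1,2) by (simp add: mult_left_mono)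
  have h3: "4*(P+Q-m)^2 - 12*(P*Q) + 12*(m*m) = (P+Q-4*m)^2 + 3*(P-Q)^2"
    by (simp add: power2_eq_square algebra_simps)
  have h4: "0 \<le> (P+Q-4*m)^2 + 3*(P-Q)^2" by simp
  have gen: "\<And>(X::int) (TT::int) (Y::int) (PQ::int) (mm::int) (mn::int). X \<le> TT \<Longrightarrow> mm \<le> mn \<Longrightarrow> 4*X - 12*PQ + 12*mm = Y \<Longrightarrow> 0 \<le> Y
     \<Longrightarrow> 3*(PQ - mn) \<le> TT" by arith
  show ?thesis using gen[OF h1 h2 h3 h4] .
qed

context
  fixes a b c M :: int
  assumes apos: "a > 0" and bpos: "b > 0" and cpos: "c > 0"
    and H: "\<And>n. \<exists>y z. fv b c y z mod a = n mod a \<and> fv b c y z \<le> M"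
begin

lemma fv_nonneg: "0 \<le> fv b c y z"
  using bpos cpos by (simp add: fv_def)

lemma exA: "\<exists>y0 z0. inA a b c y0 z0 \<and> fv b c y0 z0 mod a = fv b c y z mod a \<and> \<not> prec b c y z y0 z0"
proof -
  let ?P = "\<lambda>p::nat\<times>nat. fv b c (fst p) (snd p) mod a = fv b c y z mod a"
  obtain p1 where p1: "?P p1" "\<forall>q. ?P q \<longrightarrow> nat (fv b c (fst p1) (snd p1)) \<le> nat (fv b c (fst q) (snd q))"
    using ex_has_least_nat[of ?P "(y,z)" "\<lambda>p. nat (fv b c (fst p) (snd p))"] by auto
  let ?Q = "\<lambda>p::nat\<times>nat. ?P p \<and> fv b c (fst p) (snd p) = fv b c (fst p1) (snd p1)"
  obtain p2 where p2: "?Q p2" "\<forall>q. ?Q q \<longrightarrow> fst p2 \<le> fst q"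
    using ex_has_least_nat[of ?Q p1 fst] p1(1) by blast
  have m1: "fv b c (fst p1) (snd p1) \<le> fv b c y' z'" if "?P (y', z')" for y' z'
    using p1(2)[rule_format, of "(y',z')"] that fv_nonneg[of y' z'] fv_nonneg[of "fst p1" "snd p1"] by auto
  have "inA a b c (fst p2) (snd p2)"
    unfolding inA_def
  proof (intro allI impI)
    fix y' z' assume r: "fv b c y' z' mod a = fv b c (fst p2) (snd p2) mod a"
    then have r': "?P (y',z')" using p2(1) p1(1) by simp
    have "fv b c (fst p2) (snd p2) \<le> fv b c y' z'" using m1[OF r'] p2(1) by simp
    moreover have "fst p2 \<le> y'" if "fv b c y' z' = fv b c (fst p2) (snd p2)"
      using p2(2)[rule_format, of "(y',z')"] r' that p2(1) by auto
    ultimately show "\<not> prec b c y' z' (fst p2) (snd p2)" unfolding prec_def by auto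
  qed
  moreover have "\<not> prec b c y z (fst p2) (snd p2)"
  proof -
    have "fv b c (fst p2) (snd p2) \<le> fv b c y z" using m1[of y z] p2(1) by simp
    moreover have "fst p2 \<le> y" if "fv b c y z = fv b c (fst p2) (snd p2)"
      using p2(2)[rule_format, of "(y,z)"] that p2(1) by auto
    ultimately show ?thesis unfolding prec_def by auto
  qed
  ultimately show ?thesis using p2(1) by blast
qed

lemma down:
  assumes "inA a b c y z" "y' \<le> y" "z' \<le> z"
  shows "inA a b c y' z'"
  unfolding inA_def
proof (intro allI impI notI)
  fix qy qz
  assume r: "fv b c qy qz mod a = fv b c y' z' mod a" and p: "prec b c qy qz y' z'"
  define D where "D = fv b c (y - y') (z - z')"
  have e1: "fv b c (qy + (y - y')) (qz + (z - z')) = fv b c qy qz + D"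
    unfolding D_def fv_def by (simp add: algebra_simps)
  have e2: "fv b c y z = fv b c y' z' + D"
    unfolding D_def fv_def using assms(2,3) by (simp add: algebra_simps of_nat_diff)
  have "fv b c (qy + (y - y')) (qz + (z - z')) mod a = fv b c y z mod a"
    unfolding e1 e2 using mod_add_cong[OF r refl] .
  moreover have "prec b c (qy + (y - y')) (qz + (z - z')) y z"
    using p e1 e2 assms(2) unfolding prec_def by auto
  ultimately show False using assms(1) unfolding inA_def by blast
qed

lemma uniq:
  assumes "inA a b c y z" "inA a b c y' z'" "a dvd fv b c y z - fv b c y' z'"
  shows "y = y' \<and> z = z'"
proof (rule ccontr)
  assume ne: "\<not> (y = y' \<and> z = z')"
  have m1: "fv b c y z mod a = fv b c y' z' mod a" using assms(3) by (simp add: mod_eq_dvd_iff)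
  have "prec b c y z y' z' \<or> prec b c y' z' y z"
  proof (cases "fv b c y z = fv b c y' z'")
    case True
    have "y \<noteq> y'"
    proof
      assume "y = y'"
      with True have "c * int z = c * int z'" by (simp add: fv_def)
      with cpos have "z = z'" by simp
      with \<open>y = y'\<close> ne show False by simp
    qed
    then show ?thesis using True unfolding prec_def by auto
  next
    case False then show ?thesis unfolding prec_def by auto
  qed
  then show False using assms(1,2) m1 unfolding inA_def by metis
qed

lemma inA_le_M: "inA a b c y z \<Longrightarrow> fv b c y z \<le> M"
proof -
  assume i: "inA a b c y z"
  obtain y' z' where h: "fv b c y' z' mod a = fv b c y z mod a" "fv b c y' z' \<le> M"
    using H[of "fv b c y z"] by blast
  then have "\<not> prec b c y' z' y z" using i unfolding inA_def by blast
  then show ?thesis using h(2) unfolding prec_def by auto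
qed

lemma inA00: "inA a b c 0 0"
  unfolding inA_def prec_def
proof (intro allI impI notI)
  fix y' z' assume "fv b c y' z' < fv b c 0 0 \<or> fv b c y' z' = fv b c 0 0 \<and> y' < 0"
  then show False using fv_nonneg[of y' z'] by (auto simp: fv_def)
qed

lemma prec_trans_aux:
  "\<not> prec b c y1 z1 p q \<Longrightarrow> prec b c y1 z1 y2 z2 \<Longrightarrow> prec b c p q y2 z2"
  unfolding prec_def by auto

lemma M_nonneg: "0 \<le> M"
  using inA_le_M[OF inA00] by (simp add: fv_def)

lemma core_bound: "3 * a * b * c \<le> (M + b + c)^2"
proof -
  have exY: "\<exists>y. \<not> inA a b c y 0"
  proof
    show "\<not> inA a b c (nat M + 1) 0"
    proof
      assume "inA a b c (nat M + 1) 0"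
      then have "fv b c (nat M + 1) 0 \<le> M" by (rule inA_le_M)
      moreover have "fv b c (nat M + 1) 0 > M"
      proof -
        have "b * (M + 1) \<ge> 1 * (M + 1)"
          using bpos M_nonneg by (intro mult_right_mono) auto
        moreover have "fv b c (nat M + 1) 0 = b * (M + 1)" using M_nonneg by (simp add: fv_def)
        ultimately show ?thesis by simp
      qed
      ultimately show False by simp
    qed
  qed
  have exZ: "\<exists>z. \<not> inA a b c 0 z"
  proof
    show "\<not> inA a b c 0 (nat M + 1)"
    proof
      assume "inA a b c 0 (nat M + 1)"
      then have "fv b c 0 (nat M + 1) \<le> M" by (rule inA_le_M)
      moreover have "fv b c 0 (nat M + 1) > M"
      proof -
        have "c * (M + 1) \<ge> 1 * (M + 1)"
          using cpos M_nonneg by (intro mult_right_mono) auto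
        moreover have "fv b c 0 (nat M + 1) = c * (M + 1)" using M_nonneg by (simp add: fv_def)
        ultimately show ?thesis by simp
      qed
      ultimately show False by simp
    qed
  qed
  define Y where "Y = (LEAST y. \<not> inA a b c y 0)"
  define Z where "Z = (LEAST z. \<not> inA a b c 0 z)"
  have hY: "\<not> inA a b c Y 0" unfolding Y_def using exY by (metis LeastI)
  have hY2: "inA a b c t 0" if "t < Y" for t using that unfolding Y_def using not_less_Least by blast
  have hZ: "\<not> inA a b c 0 Z" unfolding Z_def using exZ by (metis LeastI)
  have hZ2: "inA a b c 0 t" if "t < Z" for t using that unfolding Z_def using not_less_Least by blast
  have Ypos: "Y > 0" using hY inA00 by (cases Y) auto
  have Zpos: "Z > 0" using hZ inA00 by (cases Z) auto
  obtain z1 where z1: "z1 < Z" "a dvd b * int Y - c * int z1" "c * int z1 \<le> b * int Y"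
  proof -
    obtain y1 w1 where w: "fv b c y1 w1 mod a = fv b c Y 0 mod a" "prec b c y1 w1 Y 0"
      using hY unfolding inA_def by blast
    obtain p q where pq: "inA a b c p q" "fv b c p q mod a = fv b c y1 w1 mod a" "\<not> prec b c y1 w1 p q"
      using exA by blast
    have pr: "prec b c p q Y 0" using prec_trans_aux[OF pq(3) w(2)] .
    have res: "fv b c p q mod a = fv b c Y 0 mod a" using pq(2) w(1) by simp
    have p0: "p = 0"
    proof (rule ccontr)
      assume "p \<noteq> 0"
      have iA: "inA a b c (Y - 1) 0" using hY2 Ypos by simp
      have e1: "fv b c (p - 1) q = fv b c p q - b" using \<open>p \<noteq> 0\<close> by (simp add: fv_def of_nat_diff algebra_simps)
      have e2: "fv b c (Y - 1) 0 = fv b c Y 0 - b" using Ypos by (simp add: fv_def of_nat_diff algebra_simps)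
      have "fv b c (p - 1) q mod a = fv b c (Y - 1) 0 mod a"
        unfolding e1 e2 using mod_diff_cong[OF res refl] .
      moreover have "prec b c (p - 1) q (Y - 1) 0" using pr e1 e2 \<open>p \<noteq> 0\<close> unfolding prec_def by auto
      ultimately show False using iA unfolding inA_def by blast
    qed
    have "q < Z"
    proof (rule ccontr)
      assume "\<not> q < Z"
      then have "inA a b c 0 Z" using down[of p q 0 Z] pq(1) p0 by simp
      with hZ show False by simp
    qed
    moreover have "a dvd b * int Y - c * int q"
      using res p0 by (simp add: fv_def mod_eq_dvd_iff dvd_minus_iff dvd_diff_commute)
    moreover have "c * int q \<le> b * int Y" using pr p0 unfolding prec_def fv_def by auto
    ultimately show ?thesis using that by blast
  qed
  obtain y2 where y2: "y2 < Y" "a dvd c * int Z - b * int y2" "b * int y2 < c * int Z"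
  proof -
    obtain y1 w1 where w: "fv b c y1 w1 mod a = fv b c 0 Z mod a" "prec b c y1 w1 0 Z"
      using hZ unfolding inA_def by blast
    obtain p q where pq: "inA a b c p q" "fv b c p q mod a = fv b c y1 w1 mod a" "\<not> prec b c y1 w1 p q"
      using exA by blast
    have pr: "prec b c p q 0 Z" using prec_trans_aux[OF pq(3) w(2)] .
    have res: "fv b c p q mod a = fv b c 0 Z mod a" using pq(2) w(1) by simp
    have q0: "q = 0"
    proof (rule ccontr)
      assume "q \<noteq> 0"
      have iA: "inA a b c 0 (Z - 1)" using hZ2 Zpos by simp
      have e1: "fv b c p (q - 1) = fv b c p q - c" using \<open>q \<noteq> 0\<close> by (simp add: fv_def of_nat_diff algebra_simps)
      have e2: "fv b c 0 (Z - 1) = fv b c 0 Z - c" using Zpos by (simp add: fv_def of_nat_diff algebra_simps)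
      have "fv b c p (q - 1) mod a = fv b c 0 (Z - 1) mod a"
        unfolding e1 e2 using mod_diff_cong[OF res refl] .
      moreover have "prec b c p (q - 1) 0 (Z - 1)" using pr e1 e2 unfolding prec_def by auto
      ultimately show False using iA unfolding inA_def by blast
    qed
    have "p < Y"
    proof (rule ccontr)
      assume "\<not> p < Y"
      then have "inA a b c Y 0" using down[of p q Y 0] pq(1) q0 by simp
      with hY show False by simp
    qed
    moreover have "a dvd c * int Z - b * int p"
      using res q0 by (simp add: fv_def mod_eq_dvd_iff dvd_minus_iff dvd_diff_commute)
    moreover have "b * int p < c * int Z" using pr q0 unfolding prec_def fv_def by auto
    ultimately show ?thesis using that by blast
  qed
  define S where "S = {(y, z). y < Y \<and> z < Z \<and> \<not> (Y - y2 \<le> y \<and> Z - z1 \<le> z)}"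
  have corner: "\<not> inA a b c (Y - y2) (Z - z1)"
  proof
    assume iA: "inA a b c (Y - y2) (Z - z1)"
    have "fv b c (Y - y2) (Z - z1) = (b * int Y - c * int z1) + (c * int Z - b * int y2)"
      using y2(1) z1(1) by (simp add: fv_def of_nat_diff algebra_simps)
    then have "a dvd fv b c (Y - y2) (Z - z1) - fv b c 0 0"
      using y2(2) z1(2) by (simp add: fv_def)
    then have "fv b c 0 0 mod a = fv b c (Y - y2) (Z - z1) mod a"
      by (simp add: mod_eq_dvd_iff dvd_diff_commute)
    moreover have "prec b c 0 0 (Y - y2) (Z - z1)"
      using y2(1) fv_nonneg[of "Y - y2" "Z - z1"] bpos
      unfolding prec_def fv_def by (simp; linarith)
    ultimately show False using iA unfolding inA_def by blast
  qed
  have AS: "(y, z) \<in> S" if "inA a b c y z" for y z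
  proof -
    have "y < Y" using down[OF that, of Y 0] hY by (cases "Y \<le> y") auto
    moreover have "z < Z" using down[OF that, of 0 Z] hZ by (cases "Z \<le> z") auto
    moreover have "\<not> (Y - y2 \<le> y \<and> Z - z1 \<le> z)" using down[OF that] corner by blast
    ultimately show ?thesis unfolding S_def by simp
  qed
  have inj_aux: "y1 = y2' \<and> z1' = z2'"
    if s1: "(y1, z1') \<in> S" and s2: "(y2', z2') \<in> S" and d: "a dvd fv b c y1 z1' - fv b c y2' z2'"
      and le: "y2' \<le> y1" for y1 z1' y2' z2'
  proof (cases "z2' \<le> z1'")
    case True
    define \<alpha> where "\<alpha> = y1 - y2'"
    define \<beta> where "\<beta> = z1' - z2'"
    have dab: "a dvd b * int \<alpha> + c * int \<beta>"
      using d le True unfolding \<alpha>_def \<beta>_def fv_def by (simp add: of_nat_diff algebra_simps)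
    have c1: "\<not> (\<alpha> > 0 \<and> \<beta> + z1 < Z)"
    proof
      assume h: "\<alpha> > 0 \<and> \<beta> + z1 < Z"
      have "\<alpha> < Y" using s1 unfolding S_def \<alpha>_def by auto
      have i1: "inA a b c (Y - \<alpha>) 0" using hY2 h \<open>\<alpha> < Y\<close> by simp
      have i2: "inA a b c 0 (\<beta> + z1)" using hZ2 h by simp
      have "fv b c (Y - \<alpha>) 0 - fv b c 0 (\<beta> + z1) = (b * int Y - c * int z1) - (b * int \<alpha> + c * int \<beta>)"
        using \<open>\<alpha> < Y\<close> by (simp add: fv_def of_nat_diff algebra_simps)
      then have "a dvd fv b c (Y - \<alpha>) 0 - fv b c 0 (\<beta> + z1)" using z1(2) dab by simp
      from uniq[OF i1 i2 this] \<open>\<alpha> < Y\<close> show False by simp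
    qed
    have c2: "\<not> (\<beta> > 0 \<and> \<alpha> + y2 < Y)"
    proof
      assume h: "\<beta> > 0 \<and> \<alpha> + y2 < Y"
      have "\<beta> < Z" using s1 unfolding S_def \<beta>_def by auto
      have i1: "inA a b c (\<alpha> + y2) 0" using hY2 h by simp
      have i2: "inA a b c 0 (Z - \<beta>)" using hZ2 h \<open>\<beta> < Z\<close> by simp
      have "fv b c (\<alpha> + y2) 0 - fv b c 0 (Z - \<beta>) = (b * int \<alpha> + c * int \<beta>) - (c * int Z - b * int y2)"
        using \<open>\<beta> < Z\<close> by (simp add: fv_def of_nat_diff algebra_simps)
      then have "a dvd fv b c (\<alpha> + y2) 0 - fv b c 0 (Z - \<beta>)" using y2(2) dab by simp
      from uniq[OF i1 i2 this] \<open>\<beta> < Z\<close> show False by simp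
    qed
    have "\<not> (Y - y2 \<le> y1 \<and> Z - z1 \<le> z1')" using s1 unfolding S_def by simp
    then have "\<alpha> = 0 \<and> \<beta> = 0" using c1 c2 y2(1) z1(1) le True unfolding \<alpha>_def \<beta>_def by arith
    then show ?thesis using le True unfolding \<alpha>_def \<beta>_def by simp
  next
    case False
    define \<alpha> where "\<alpha> = y1 - y2'"
    define \<beta> where "\<beta> = z2' - z1'"
    have dab: "a dvd b * int \<alpha> - c * int \<beta>"
      using d le False unfolding \<alpha>_def \<beta>_def fv_def by (simp add: of_nat_diff algebra_simps)
    have "\<alpha> < Y" using s1 unfolding S_def \<alpha>_def by auto
    have "\<beta> < Z" using s2 unfolding S_def \<beta>_def by auto
    have i1: "inA a b c \<alpha> 0" using hY2 \<open>\<alpha> < Y\<close> by simp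
    have i2: "inA a b c 0 \<beta>" using hZ2 \<open>\<beta> < Z\<close> by simp
    have "a dvd fv b c \<alpha> 0 - fv b c 0 \<beta>" using dab by (simp add: fv_def)
    from uniq[OF i1 i2 this] False show ?thesis unfolding \<beta>_def by simp
  qed
  have injS: "p = q" if "p \<in> S" "q \<in> S" "a dvd fv b c (fst p) (snd p) - fv b c (fst q) (snd q)" for p q
  proof (cases "fst q \<le> fst p")
    case True
    then show ?thesis using inj_aux[of "fst p" "snd p" "fst q" "snd q"] that by (simp add: prod_eq_iff)
  next
    case False
    have "a dvd fv b c (fst q) (snd q) - fv b c (fst p) (snd p)"
      using that(3) by (simp add: dvd_diff_commute)
    then show ?thesis using inj_aux[of "fst q" "snd q" "fst p" "snd p"] that False by (simp add: prod_eq_iff)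
  qed
  have SA: "inA a b c y z" if "(y, z) \<in> S" for y z
  proof -
    obtain y0 z0 where q: "inA a b c y0 z0" "fv b c y0 z0 mod a = fv b c y z mod a"
      using exA by blast
    have "(y0, z0) = (y, z)"
      using injS[of "(y0,z0)" "(y,z)"] AS[OF q(1)] that q(2) by (simp add: mod_eq_dvd_iff)
    then show ?thesis using q(1) by simp
  qed
  have finS: "finite S" unfolding S_def
    by (rule finite_subset[of _ "{..<Y} \<times> {..<Z}"]) auto
  have sub: "{0..<a} \<subseteq> (\<lambda>p. fv b c (fst p) (snd p) mod a) ` S"
  proof
    fix n assume n: "n \<in> {0..<a}"
    obtain y z where yz: "fv b c y z mod a = n mod a" using H by blast
    obtain y0 z0 where q: "inA a b c y0 z0" "fv b c y0 z0 mod a = fv b c y z mod a"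
      using exA by blast
    have "fv b c y0 z0 mod a = n" using q(2) yz n by simp
    then show "n \<in> (\<lambda>p. fv b c (fst p) (snd p) mod a) ` S"
      using AS[OF q(1)] by force
  qed
  have "nat a \<le> card S"
  proof -
    have "card {0..<a} \<le> card ((\<lambda>p. fv b c (fst p) (snd p) mod a) ` S)"
      by (rule card_mono) (use finS sub in auto)
    also have "\<dots> \<le> card S" by (rule card_image_le[OF finS])
    finally show ?thesis by simp
  qed
  moreover have "card S = Y * Z - y2 * z1"
  proof -
    have "S = ({..<Y} \<times> {..<Z}) - ({Y - y2..<Y} \<times> {Z - z1..<Z})"
      unfolding S_def by auto
    moreover have "card (({..<Y} \<times> {..<Z}) - ({Y - y2..<Y} \<times> {Z - z1..<Z})) = Y * Z - y2 * z1"
      by (subst card_Diff_subset) (auto simp: card_cartesian_product y2(1) z1(1) less_imp_le)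
    ultimately show ?thesis by simp
  qed
  moreover have "y2 * z1 \<le> Y * Z" using y2(1) z1(1) by (simp add: mult_le_mono less_imp_le)
  ultimately have acard: "a \<le> int Y * int Z - int y2 * int z1"
    using apos by (simp add: of_nat_diff flip: of_nat_mult)
  have k1: "(Y - 1, Z - z1 - 1) \<in> S" unfolding S_def using Ypos z1(1) by auto
  have k2: "(Y - y2 - 1, Z - 1) \<in> S" unfolding S_def using Zpos y2(1) by auto
  have M1: "b * (int Y - 1) + c * (int Z - int z1 - 1) \<le> M"
    using inA_le_M[OF SA[OF k1]] Ypos z1(1) by (simp add: fv_def of_nat_diff algebra_simps)
  have M2: "b * (int Y - int y2 - 1) + c * (int Z - 1) \<le> M"
    using inA_le_M[OF SA[OF k2]] Zpos y2(1) by (simp add: fv_def of_nat_diff algebra_simps)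
  define P where "P = b * int Y"
  define Q where "Q = c * int Z"
  define q1 where "q1 = c * int z1"
  define p2 where "p2 = b * int y2"
  have T1: "P + Q - q1 \<le> M + b + c" using M1 unfolding P_def Q_def q1_def by (simp add: algebra_simps)
  have T2: "P + Q - p2 \<le> M + b + c" using M2 unfolding P_def Q_def p2_def by (simp add: algebra_simps)
  have abc: "a * b * c \<le> P * Q - p2 * q1"
  proof -
    have "a * (b * c) \<le> (int Y * int Z - int y2 * int z1) * (b * c)"
      using acard bpos cpos by (intro mult_right_mono) auto
    then show ?thesis unfolding P_def Q_def p2_def q1_def by (simp add: algebra_simps)
  qed
  have q1P: "q1 \<le> P" using z1(3) unfolding q1_def P_def by simp
  have p2Q: "p2 \<le> Q" using y2(3) unfolding p2_def Q_def by simp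
  have q10: "0 \<le> q1" using cpos unfolding q1_def by simp
  have p20: "0 \<le> p2" using bpos unfolding p2_def by simp
  have P0: "0 \<le> P" using bpos unfolding P_def by simp
  have Q0: "0 \<le> Q" using cpos unfolding Q_def by simp
  have "3 * (P * Q - p2 * q1) \<le> (M + b + c)^2"
  proof (cases "p2 \<le> q1")
    case True
    show ?thesis using alg_ineq[of p2 q1 P Q "M + b + c"] True p20 q1P Q0 T2 by simp
  next
    case False
    show ?thesis using alg_ineq[of q1 p2 P Q "M + b + c"] False q10 q1P Q0 T1 by (simp add: mult.commute)
  qed
  then show ?thesis using abc by (simp add: algebra_simps)
qed

end


lemma sg_iff: "n \<in> semigroup3 e1 e2 e3 \<longleftrightarrow> (\<exists>c1 c2 c3. n = c1 * e1 + c2 * e2 + c3 * e3 \<and> c1 \<ge> 0 \<and> c2 \<ge> 0 \<and> c3 \<ge> 0)"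
  unfolding semigroup3_def by blast

lemma frob:
  fixes e1 e2 e3 :: int
  assumes p: "e1 > 0" "e2 > 0" "e3 > 0" and g: "gcd e1 (gcd e2 e3) = 1"
    and n: "n \<ge> e1 * (e2 + e3)"
  shows "n \<in> semigroup3 e1 e2 e3"
proof -
  obtain u v where uv: "u * e2 + v * e3 = gcd e2 e3" using bezout_int by blast
  obtain s t where st: "s * e1 + t * gcd e2 e3 = gcd e1 (gcd e2 e3)" using bezout_int by blast
  have one: "s * e1 + (t * u) * e2 + (t * v) * e3 = 1"
    using st uv g by (simp add: algebra_simps flip: uv)
  define k2 where "k2 = (n * (t * u)) div e1"
  define t2 where "t2 = (n * (t * u)) mod e1"
  define k3 where "k3 = (n * (t * v)) div e1"
  define t3 where "t3 = (n * (t * v)) mod e1"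
  have d2: "n * (t * u) = k2 * e1 + t2" unfolding k2_def t2_def by simp
  have d3: "n * (t * v) = k3 * e1 + t3" unfolding k3_def t3_def by simp
  have t2b: "0 \<le> t2" "t2 < e1" unfolding t2_def using p by auto
  have t3b: "0 \<le> t3" "t3 < e1" unfolding t3_def using p by auto
  define c1 where "c1 = n * s + k2 * e2 + k3 * e3"
  have eq: "n = c1 * e1 + t2 * e2 + t3 * e3"
  proof -
    have "n = n * (s * e1 + (t * u) * e2 + (t * v) * e3)" using one by simp
    also have "\<dots> = n * s * e1 + (n * (t * u)) * e2 + (n * (t * v)) * e3" by (simp add: algebra_simps)
    also have "\<dots> = c1 * e1 + t2 * e2 + t3 * e3" unfolding d2 d3 c1_def by (simp add: algebra_simps)
    finally show ?thesis .
  qed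
  have "t2 * e2 \<le> e1 * e2" using t2b p by (intro mult_right_mono) auto
  moreover have "t3 * e3 \<le> e1 * e3" using t3b p by (intro mult_right_mono) auto
  ultimately have "0 \<le> c1 * e1" using eq n by (simp add: algebra_simps)
  then have "0 \<le> c1" using p by (simp add: zero_le_mult_iff)
  then show ?thesis unfolding sg_iff using eq t2b t3b by blast
qed

lemma conductor_prop:
  fixes e1 e2 e3 :: int
  assumes p: "e1 > 0" "e2 > 0" "e3 > 0" and g: "gcd e1 (gcd e2 e3) = 1"
  shows "\<forall>n\<ge>conductor3 e1 e2 e3. n \<in> semigroup3 e1 e2 e3"
proof -
  let ?P = "\<lambda>s::int. \<forall>n\<ge>s. n \<in> semigroup3 e1 e2 e3"
  have nonneg: "0 \<le> y" if "?P y" for y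
  proof (rule ccontr)
    assume "\<not> 0 \<le> y"
    then have "-1 \<in> semigroup3 e1 e2 e3" using that by auto
    then obtain c1 c2 c3 where "-1 = c1 * e1 + c2 * e2 + c3 * e3" "c1 \<ge> 0" "c2 \<ge> 0" "c3 \<ge> 0"
      unfolding sg_iff by blast
    moreover have "0 \<le> c1 * e1" "0 \<le> c2 * e2" "0 \<le> c3 * e3" using calculation p by auto
    ultimately show False by linarith
  qed
  have P0: "?P (e1 * (e2 + e3))" using frob[OF p g] by blast
  obtain k where k: "?P (int k)" "\<forall>j. ?P (int j) \<longrightarrow> k \<le> j"
    using ex_has_least_nat[of "\<lambda>k. ?P (int k)" "nat (e1 * (e2 + e3))" "\<lambda>k. k"] P0 p
    by (auto simp: mult_nonneg_nonneg)
  have least: "\<forall>y. ?P y \<longrightarrow> int k \<le> y"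
  proof (intro allI impI)
    fix y assume "?P y"
    then have "?P (int (nat y))" using nonneg by simp
    then have "k \<le> nat y" using k(2) by blast
    then show "int k \<le> y" using nonneg[OF \<open>?P y\<close>] by linarith
  qed
  show ?thesis unfolding conductor3_def
    by (rule LeastI2_order[of ?P "int k"]) (use k(1) least in auto)
qed

lemma conductor_bound:
  fixes e1 e2 e3 :: int
  assumes p: "e1 > 0" "e2 > 0" "e3 > 0" and g: "gcd e1 (gcd e2 e3) = 1"
  shows "sqrt 3 * sqrt (real_of_int (e1 * e2 * e3)) - real_of_int (e1 + e2 + e3)
          \<le> real_of_int (conductor3 e1 e2 e3)"
proof -
  define C where "C = conductor3 e1 e2 e3"
  have CP: "\<forall>n\<ge>C. n \<in> semigroup3 e1 e2 e3" using conductor_prop[OF p g] unfolding C_def .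
  have H: "\<exists>y z. fv e2 e3 y z mod e1 = n mod e1 \<and> fv e2 e3 y z \<le> C + e1 - 1" for n
  proof -
    define n' where "n' = C + (n - C) mod e1"
    have b1: "C \<le> n'" "n' \<le> C + e1 - 1" unfolding n'_def using p
      by (auto simp: pos_mod_sign)
    have m: "n' mod e1 = n mod e1" unfolding n'_def by (simp add: mod_add_right_eq)
    obtain c1 c2 c3 where c: "n' = c1 * e1 + c2 * e2 + c3 * e3" "c1 \<ge> 0" "c2 \<ge> 0" "c3 \<ge> 0"
      using CP b1(1) unfolding sg_iff by blast
    have fe: "fv e2 e3 (nat c2) (nat c3) = n' - c1 * e1" unfolding fv_def using c by simp
    have "fv e2 e3 (nat c2) (nat c3) mod e1 = n mod e1" unfolding fe using m by (simp add: mod_diff_right_eq[symmetric])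
    moreover have "fv e2 e3 (nat c2) (nat c3) \<le> C + e1 - 1" unfolding fe using b1 c(2) p(1) mult_nonneg_nonneg[of c1 e1] by linarith
    ultimately show ?thesis by blast
  qed
  have cb: "3 * e1 * e2 * e3 \<le> (C + e1 - 1 + e2 + e3)^2"
    using core_bound[OF p H] by blast
  have nn: "0 \<le> C + e1 - 1 + e2 + e3"
  proof -
    obtain y z where "fv e2 e3 y z \<le> C + e1 - 1" using H by blast
    moreover have "0 \<le> fv e2 e3 y z" unfolding fv_def using p by simp
    ultimately show ?thesis using p by linarith
  qed
  have "sqrt 3 * sqrt (real_of_int (e1 * e2 * e3)) = sqrt (real_of_int (3 * e1 * e2 * e3))"
    by (simp add: real_sqrt_mult[symmetric] mult.assoc)
  also have "\<dots> \<le> sqrt (real_of_int ((C + e1 - 1 + e2 + e3)^2))"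
    using cb by (simp only: real_sqrt_le_iff of_int_le_iff)
  also have "\<dots> = real_of_int (C + e1 - 1 + e2 + e3)" using nn by simp
  finally show ?thesis unfolding C_def by simp
qed



lemma mg3_intro:
  fixes x y z :: int
  assumes p: "0 < x" "x < y" "y < z"
    and n2: "\<forall>k\<ge>0. y \<noteq> k * x" and n3: "\<forall>k\<ge>0. \<forall>l\<ge>0. z \<noteq> k * x + l * y"
  shows "min_gen_set {x, y, z}"
  unfolding min_gen_set_def
proof (intro conjI ballI)
  show "finite {x, y, z}" by simp
next
  fix t assume "t \<in> {x, y, z}" then show "t > 0" using p by auto
next
  fix t assume t: "t \<in> {x, y, z}"
  show "\<not> (\<exists>c. (\<forall>b\<in>{x, y, z} - {t}. 0 \<le> c b) \<and> t = (\<Sum>b\<in>{x, y, z} - {t}. c b * b))"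
  proof
    assume "\<exists>c. (\<forall>b\<in>{x, y, z} - {t}. 0 \<le> c b) \<and> t = (\<Sum>b\<in>{x, y, z} - {t}. c b * b)"
    then obtain c where c: "\<forall>b\<in>{x, y, z} - {t}. 0 \<le> c b" "t = (\<Sum>b\<in>{x, y, z} - {t}. c b * b)" by blast
    have ge: "v \<le> c v * v" if "1 \<le> c v" "0 < v" for v
      using mult_right_mono[OF that(1)] that(2) by simp
    consider "t = x" | "t = y" | "t = z" using t by auto
    then show False
    proof cases
      case 1
      then have s: "{x, y, z} - {t} = {y, z}" using p by auto
      have cy: "0 \<le> c y" "0 \<le> c z" using c(1) s by auto
      have e: "x = c y * y + c z * z" using c(2) s 1 p by simp
      show False
      proof (cases "c y = 0 \<and> c z = 0")
        case True then show ?thesis using e p by simp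
      next
        case False
        then have "1 \<le> c y \<or> 1 \<le> c z" using cy by linarith
        then have "y \<le> c y * y \<or> z \<le> c z * z" using ge[of y] ge[of z] p by linarith
        moreover have "0 \<le> c y * y" "0 \<le> c z * z" using cy p by auto
        ultimately show ?thesis using e p by linarith
      qed
    next
      case 2
      then have s: "{x, y, z} - {t} = {x, z}" using p by auto
      have cy: "0 \<le> c x" "0 \<le> c z" using c(1) s by auto
      have e: "y = c x * x + c z * z" using c(2) s 2 p by simp
      show False
      proof (cases "c z = 0")
        case True then show ?thesis using e n2 cy by simp
      next
        case False
        then have "1 \<le> c z" using cy by linarith
        then have "z \<le> c z * z" using ge[of z] p by linarith
        moreover have "0 \<le> c x * x" using cy p by auto
        ultimately show ?thesis using e p by linarith
      qed
    next
      case 3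
      then have s: "{x, y, z} - {t} = {x, y}" using p by auto
      have cy: "0 \<le> c x" "0 \<le> c y" using c(1) s by auto
      have e: "z = c x * x + c y * y" using c(2) s 3 p by simp
      then show False using n3 cy by blast
    qed
  qed
qed

lemma mg3_dest:
  fixes x y z :: int
  assumes m: "min_gen_set {x, y, z}" and p: "x < y" "y < z"
  shows "\<forall>k\<ge>0. y \<noteq> k * x" "\<forall>k\<ge>0. \<forall>l\<ge>0. z \<noteq> k * x + l * y"
proof -
  have s2: "{x, y, z} - {y} = {x, z}" using p by auto
  have s3: "{x, y, z} - {z} = {x, y}" using p by auto
  have mm: "\<forall>a\<in>{x, y, z}. \<not> (\<exists>c. (\<forall>b\<in>{x, y, z} - {a}. 0 \<le> c b) \<and> a = (\<Sum>b\<in>{x, y, z} - {a}. c b * b))"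
    using m[unfolded min_gen_set_def] by (rule conjunct2[OF conjunct2])
  have m2: "\<not> (\<exists>c. (\<forall>b\<in>{x, z}. 0 \<le> c b) \<and> y = (\<Sum>b\<in>{x, z}. c b * b))"
    using bspec[OF mm, of y] unfolding s2 by simp
  have m3: "\<not> (\<exists>c. (\<forall>b\<in>{x, y}. 0 \<le> c b) \<and> z = (\<Sum>b\<in>{x, y}. c b * b))"
    using bspec[OF mm, of z] unfolding s3 by simp
  show "\<forall>k\<ge>0. y \<noteq> k * x"
  proof (intro allI impI notI)
    fix k :: int assume k: "0 \<le> k" "y = k * x"
    let ?c = "\<lambda>b. if b = x then k else 0"
    have "\<exists>c. (\<forall>b\<in>{x, z}. 0 \<le> c b) \<and> y = (\<Sum>b\<in>{x, z}. c b * b)" by (rule exI[of _ ?c]) (use k p in auto)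
    with m2 show False by contradiction
  qed
  show "\<forall>k\<ge>0. \<forall>l\<ge>0. z \<noteq> k * x + l * y"
  proof (intro allI impI notI)
    fix k l :: int assume k: "0 \<le> k" "0 \<le> l" "z = k * x + l * y"
    let ?c = "\<lambda>b. if b = x then k else l"
    have "\<exists>c. (\<forall>b\<in>{x, y}. 0 \<le> c b) \<and> z = (\<Sum>b\<in>{x, y}. c b * b)" by (rule exI[of _ ?c]) (use k p in auto)
    with m3 show False by contradiction
  qed
qed

lemma zero_from_small:
  fixes N w K :: int
  assumes "0 < N" "N * \<bar>w\<bar> \<le> K" "K < N"
  shows "w = 0"
proof (rule ccontr)
  assume "w \<noteq> 0"
  then have "1 \<le> \<bar>w\<bar>" by simp
  then have "N * 1 \<le> N * \<bar>w\<bar>" using assms(1) by (intro mult_left_mono) auto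
  then have "N \<le> N * \<bar>w\<bar>" by simp
  then show False using assms by linarith
qed

lemma coef_bound:
  fixes k x N d3 w :: int
  assumes "0 \<le> k" "N \<le> 2 * x" "k * x \<le> w" "w \<le> N * d3" "0 < N"
  shows "k \<le> 2 * d3"
proof -
  have "k * N \<le> k * (2 * x)" using assms by (intro mult_left_mono) auto
  also have "\<dots> = 2 * (k * x)" by simp
  also have "\<dots> \<le> 2 * (N * d3)" using assms(3,4) by linarith
  also have "\<dots> = (2 * d3) * N" by simp
  finally have "k * N \<le> (2 * d3) * N" .
  then show ?thesis using assms(5) by (simp add: mult_le_cancel_right_pos)
qed

lemma estar:
  fixes d1 d2 d3 k1 k2 u v :: int and N :: nat
  assumes d: "0 < d1" "d1 < d2" "d2 < d3"
    and nd2: "\<forall>k\<ge>0. d2 \<noteq> k * d1" and nd3: "\<forall>k\<ge>0. \<forall>l\<ge>0. d3 \<noteq> k * d1 + l * d2"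
    and kk: "k1 * d2 = k2 * d1" "u * k1 + v * k2 = 1"
    and N1: "2 * (\<bar>u\<bar> + \<bar>v\<bar>) + 1 \<le> int N" and N2: "2 * d3 * (\<bar>u\<bar> + \<bar>v\<bar>) < int N"
  shows "gcd (int N * d1 - v) (gcd (int N * d2 + u) (int N * d3)) = 1"
    "min_gen_set {int N * d1 - v, int N * d2 + u, int N * d3}"
proof -
  define n where "n = int N"
  define B where "B = \<bar>u\<bar> + \<bar>v\<bar>"
  define x where "x = n * d1 - v"
  define y where "y = n * d2 + u"
  define z where "z = n * d3"
  have n0: "0 < n" using N1 unfolding n_def by simp
  have "k1 * y - k2 * x = n * (k1 * d2 - k2 * d1) + (u * k1 + v * k2)"
    unfolding x_def y_def by (simp add: algebra_simps)
  then have kxy: "k1 * y - k2 * x = 1" using kk by simp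
  show "gcd (int N * d1 - v) (gcd (int N * d2 + u) (int N * d3)) = 1"
  proof -
    let ?g = "gcd x (gcd y z)"
    have "?g dvd x" "?g dvd y" by (auto intro: dvd_trans[OF gcd_dvd2 gcd_dvd1])
    then have "?g dvd k1 * y - k2 * x" by (simp add: dvd_diff)
    then have "?g dvd 1" using kxy by simp
    then have "?g = 1" by simp
    then show ?thesis unfolding x_def y_def z_def n_def .
  qed
  have m1: "n \<le> n * d1" using d n0 by simp
  have m12: "n * d1 + n \<le> n * d2"
  proof -
    have "n * (d1 + 1) \<le> n * d2" using d n0 by (intro mult_left_mono) auto
    then show ?thesis by (simp add: algebra_simps)
  qed
  have m23: "n * d2 + n \<le> n * d3"
  proof -
    have "n * (d2 + 1) \<le> n * d3" using d n0 by (intro mult_left_mono) auto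
    then show ?thesis by (simp add: algebra_simps)
  qed
  have Bn: "2 * B + 1 \<le> n" using N1 unfolding B_def n_def .
  have "\<bar>u\<bar> \<le> B" "\<bar>v\<bar> \<le> B" unfolding B_def by auto
  then have bu: "-B \<le> u" "u \<le> B" "-B \<le> v" "v \<le> B" by auto
  have x0: "0 < x" unfolding x_def using m1 Bn bu by linarith
  have x2: "n \<le> 2 * x" unfolding x_def using m1 Bn bu by arith
  have xy: "x < y" unfolding x_def y_def using m12 Bn bu by linarith
  have yz: "y < z" unfolding y_def z_def using m23 Bn bu by linarith
  have d30: "1 \<le> d3" using d by simp
  have NB: "2 * d3 * B < n" using N2 unfolding B_def n_def .
  have ub: "\<bar>u\<bar> \<le> 2 * d3 * \<bar>u\<bar>" "\<bar>v\<bar> \<le> 2 * d3 * \<bar>v\<bar>"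
    using mult_right_mono[of 1 "2*d3" "\<bar>u\<bar>"] mult_right_mono[of 1 "2*d3" "\<bar>v\<bar>"] d30 by auto
  have n2': "\<forall>k\<ge>0. y \<noteq> k * x"
  proof (intro allI impI notI)
    fix k :: int assume k: "0 \<le> k" "y = k * x"
    have kb: "k \<le> 2 * d3" using coef_bound[of k n x z d3] k x2 yz n0 unfolding z_def by simp
    have "n * (k * d1 - d2) = u + k * v" using k(2) unfolding x_def y_def by (simp add: algebra_simps)
    moreover have "\<bar>u + k * v\<bar> \<le> 2 * d3 * B"
    proof -
      have "\<bar>u + k * v\<bar> \<le> \<bar>u\<bar> + k * \<bar>v\<bar>" using k(1) by (simp add: abs_mult abs_triangle_ineq[THEN order_trans])
      also have "k * \<bar>v\<bar> \<le> 2 * d3 * \<bar>v\<bar>" using kb by (intro mult_right_mono) auto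
      then have "\<bar>u\<bar> + k * \<bar>v\<bar> \<le> 2 * d3 * \<bar>u\<bar> + 2 * d3 * \<bar>v\<bar>" using ub by linarith
      finally show ?thesis unfolding B_def by (simp add: algebra_simps)
    qed
    ultimately have "n * \<bar>k * d1 - d2\<bar> \<le> 2 * d3 * B" using n0 by (metis abs_mult abs_of_pos)
    then have "k * d1 - d2 = 0" using zero_from_small n0 NB by blast
    then have "d2 = k * d1" by simp
    then show False using nd2 k(1) by blast
  qed
  have n3': "\<forall>k\<ge>0. \<forall>l\<ge>0. z \<noteq> k * x + l * y"
  proof (intro allI impI notI)
    fix k l :: int assume k: "0 \<le> k" "0 \<le> l" "z = k * x + l * y"
    have kx0: "0 \<le> k * x" "0 \<le> l * y" using k x0 xy by auto
    have lxy: "l * x \<le> l * y" using k(2) xy by (intro mult_left_mono) auto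
    have kb: "k \<le> 2 * d3" using coef_bound[of k n x z d3] k kx0 x2 n0 unfolding z_def by simp
    have lb: "l \<le> 2 * d3" using coef_bound[of l n x z d3] k kx0 lxy x2 n0 unfolding z_def by simp
    have "n * (k * d1 + l * d2 - d3) = k * v - l * u" using k(3) unfolding x_def y_def z_def by (simp add: algebra_simps)
    moreover have "\<bar>k * v - l * u\<bar> \<le> 2 * d3 * B"
    proof -
      have "\<bar>k * v - l * u\<bar> \<le> k * \<bar>v\<bar> + l * \<bar>u\<bar>" using k(1,2) by (simp add: abs_mult abs_triangle_ineq4[THEN order_trans])
      moreover have "k * \<bar>v\<bar> \<le> 2 * d3 * \<bar>v\<bar>" using kb by (intro mult_right_mono) auto
      moreover have "l * \<bar>u\<bar> \<le> 2 * d3 * \<bar>u\<bar>" using lb by (intro mult_right_mono) auto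
      ultimately show ?thesis unfolding B_def by (simp add: algebra_simps)
    qed
    ultimately have "n * \<bar>k * d1 + l * d2 - d3\<bar> \<le> 2 * d3 * B" using n0 by (metis abs_mult abs_of_pos)
    then have "k * d1 + l * d2 - d3 = 0" using zero_from_small n0 NB by blast
    then have "d3 = k * d1 + l * d2" by simp
    then show False using nd3 k(1,2) by blast
  qed
  show "min_gen_set {int N * d1 - v, int N * d2 + u, int N * d3}"
    using mg3_intro[OF x0 xy yz n2' n3'] unfolding x_def y_def z_def n_def .
qed



lemma ratio_bound:
  fixes x y z n D \<epsilon> :: real
  assumes "n/2 \<le> x" "n/2 \<le> y" "n/2 \<le> z" "x \<le> 2*n*D" "y \<le> 2*n*D" "z \<le> 2*n*D"
    "0 < n" "0 < \<epsilon>" "288 * D^2 \<le> \<epsilon>^2 * n"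
  shows "x + y + z \<le> \<epsilon> * sqrt (x*y*z)"
proof -
  have s0: "0 \<le> x+y+z" using assms by linarith
  have s1: "x+y+z \<le> 6*n*D" using assms by linarith
  have "(x+y+z)^2 \<le> (6*n*D)^2" by (rule power_mono[OF s1 s0])
  also have "\<dots> = 36 * (n^2 * D^2)" by (simp add: power_mult_distrib)
  also have "\<dots> \<le> \<epsilon>^2 * ((n/2)*(n/2)*(n/2))"
  proof -
    have "n^2 * (288*D^2) \<le> n^2 * (\<epsilon>^2 * n)" using assms(9) by (rule mult_left_mono) simp
    then show ?thesis by (simp add: power2_eq_square algebra_simps)
  qed
  also have "\<dots> \<le> \<epsilon>^2 * (x*y*z)"
  proof -
    have n0: "0 \<le> n/2" using assms by simp
    have "(n/2)*(n/2) \<le> x*y" using assms(1,2) n0 by (intro mult_mono) auto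
    moreover have "0 \<le> x*y" using assms(1,2) n0 by simp
    ultimately have "(n/2)*(n/2)*(n/2) \<le> x*y*z" using assms(1,2,3) n0 by (intro mult_mono) auto
    then show ?thesis by (intro mult_left_mono) auto
  qed
  finally have "(x+y+z)^2 \<le> \<epsilon>^2 * (x*y*z)" .
  then have "x+y+z \<le> sqrt (\<epsilon>^2 * (x*y*z))" by (rule real_le_rsqrt)
  also have "\<dots> = \<epsilon> * sqrt (x*y*z)" using assms(8) by (simp add: real_sqrt_mult)
  finally show ?thesis .
qed

lemma MNr_mem: "(e1, e2, e3) \<in> MNr d1 d2 d3 N \<rho> \<longleftrightarrow>
   \<bar>real_of_int (e1 - int N * d1)\<bar> \<le> \<rho> \<and>
   \<bar>real_of_int (e2 - int N * d2)\<bar> \<le> \<rho> \<and>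
   \<bar>real_of_int (e3 - int N * d3)\<bar> \<le> \<rho> \<and>
   gcd e1 (gcd e2 e3) = 1 \<and> min_gen_set {e1, e2, e3}"
  unfolding MNr_def by auto

lemma abs_ceil: "\<bar>real_of_int t\<bar> \<le> \<rho> \<Longrightarrow> \<bar>t\<bar> \<le> \<lceil>\<rho>\<rceil>"
proof -
  assume "\<bar>real_of_int t\<bar> \<le> \<rho>"
  then have "real_of_int \<bar>t\<bar> \<le> real_of_int \<lceil>\<rho>\<rceil>" using le_of_int_ceiling[of \<rho>] by (simp only: of_int_abs)
  then show ?thesis by (simp only: of_int_le_iff)
qed

lemma MNr_finite: "finite (MNr d1 d2 d3 N \<rho>)"
proof -
  define R where "R = \<lceil>\<rho>\<rceil>"
  have "MNr d1 d2 d3 N \<rho> \<subseteq> {int N * d1 - R..int N * d1 + R} \<times> ({int N * d2 - R..int N * d2 + R} \<times> {int N * d3 - R..int N * d3 + R})"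
  proof
    fix p assume p: "p \<in> MNr d1 d2 d3 N \<rho>"
    obtain e1 e2 e3 where pe: "p = (e1, e2, e3)" by (cases p) auto
    have "\<bar>e1 - int N * d1\<bar> \<le> R" "\<bar>e2 - int N * d2\<bar> \<le> R" "\<bar>e3 - int N * d3\<bar> \<le> R"
      using p unfolding pe MNr_mem R_def by (auto intro!: abs_ceil)
    then show "p \<in> {int N * d1 - R..int N * d1 + R} \<times> ({int N * d2 - R..int N * d2 + R} \<times> {int N * d3 - R..int N * d3 + R})"
      unfolding pe by auto
  qed
  then show ?thesis by (rule finite_subset) auto
qed

lemma elem_bound:
  fixes d1 d2 d3 e1 e2 e3 :: int and N :: nat and \<rho> \<epsilon> :: real
  assumes d: "0 < d1" "d1 < d2" "d2 < d3" and m: "(e1, e2, e3) \<in> MNr d1 d2 d3 N \<rho>"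
    and rho: "\<rho> \<le> real N / 2" and N0: "0 < N" and eps: "0 < \<epsilon>"
    and big: "288 * (real_of_int d3)^2 \<le> \<epsilon>^2 * real N"
  shows "(sqrt 3 - \<epsilon>) * sqrt (real_of_int (e1 * e2 * e3)) \<le> real_of_int (conductor3 e1 e2 e3)"
    and "0 < real_of_int (e1 * e2 * e3)"
proof -
  define n where "n = real N"
  define x where "x = real_of_int e1"
  define y where "y = real_of_int e2"
  define z where "z = real_of_int e3"
  define D1 where "D1 = real_of_int d1"
  define D2 where "D2 = real_of_int d2"
  define D3 where "D3 = real_of_int d3"
  have mm: "\<bar>x - n * D1\<bar> \<le> \<rho>" "\<bar>y - n * D2\<bar> \<le> \<rho>" "\<bar>z - n * D3\<bar> \<le> \<rho>"
    and g: "gcd e1 (gcd e2 e3) = 1"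
    using m unfolding MNr_mem x_def y_def z_def n_def D1_def D2_def D3_def by auto
  have n0: "0 < n" using N0 unfolding n_def by simp
  have D: "1 \<le> D1" "D1 \<le> D2" "D2 \<le> D3" using d unfolding D1_def D2_def D3_def by auto
  have nD1: "n \<le> n * D1" using D n0 by simp
  have nD2: "n * D1 \<le> n * D2" "n * D2 \<le> n * D3" using D n0 by auto
  have r2: "\<rho> \<le> n / 2" using rho unfolding n_def .
  have lx: "n/2 \<le> x" "n/2 \<le> y" "n/2 \<le> z" using mm nD1 nD2 r2 by (auto simp: abs_le_iff)
  have ux: "x \<le> 2*n*D3" "y \<le> 2*n*D3" "z \<le> 2*n*D3" using mm nD1 nD2 r2 by (auto simp: abs_le_iff)
  have rb: "x + y + z \<le> \<epsilon> * sqrt (x*y*z)"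
    using ratio_bound[OF lx ux n0 eps] big unfolding D3_def n_def by simp
  have pos: "0 < e1" "0 < e2" "0 < e3" using lx n0 unfolding x_def y_def z_def by auto
  have cb: "sqrt 3 * sqrt (real_of_int (e1 * e2 * e3)) - real_of_int (e1 + e2 + e3)
          \<le> real_of_int (conductor3 e1 e2 e3)" using conductor_bound[OF pos g] .
  have P: "real_of_int (e1 * e2 * e3) = x*y*z" unfolding x_def y_def z_def by simp
  show "(sqrt 3 - \<epsilon>) * sqrt (real_of_int (e1 * e2 * e3)) \<le> real_of_int (conductor3 e1 e2 e3)"
    using cb rb unfolding P by (simp add: x_def y_def z_def algebra_simps)
  show "0 < real_of_int (e1 * e2 * e3)" using pos by simp
qed


theorem mainTheorem4:
  fixes d1 d2 d3 :: int and r :: "nat \<Rightarrow> real"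
  assumes "0 < d1" and "d1 < d2" and "d2 < d3"
    and "gcd d1 (gcd d2 d3) = 1"
    and "min_gen_set {d1, d2, d3}"
    and "filterlim r at_top sequentially"
    and "(\<lambda>N. r N / real N) \<longlonglongrightarrow> 0"
  shows "Liminf sequentially (\<lambda>N. ereal (KNr d1 d2 d3 N (r N))) \<ge> ereal (sqrt 3)"
proof -
  note d = assms(1,2,3)
  have nd2: "\<forall>k\<ge>0. d2 \<noteq> k * d1" and nd3: "\<forall>k\<ge>0. \<forall>l\<ge>0. d3 \<noteq> k * d1 + l * d2"
    using mg3_dest[OF assms(5) assms(2,3)] by blast+
  define g1 where "g1 = gcd d1 d2"
  define k1 where "k1 = d1 div g1"
  define k2 where "k2 = d2 div g1"
  have "coprime k1 k2" unfolding k1_def k2_def g1_def using div_gcd_coprime[of d1 d2] d by simp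
  then obtain u v where uv: "u * k1 + v * k2 = 1" using bezout_int[of k1 k2]
    by (auto simp: coprime_iff_gcd_eq_1)
  have kk: "k1 * d2 = k2 * d1"
  proof -
    have e: "d1 = g1 * k1" "d2 = g1 * k2" unfolding k1_def k2_def g1_def by simp_all
    have "k1 * (g1 * k2) = k2 * (g1 * k1)" by (simp add: algebra_simps)
    then show ?thesis using e by simp
  qed
  define B where "B = \<bar>u\<bar> + \<bar>v\<bar>"
  have B0: "0 \<le> B" unfolding B_def by simp
  show ?thesis unfolding le_Liminf_iff
  proof (intro allI impI)
    fix y :: ereal assume y: "y < ereal (sqrt 3)"
    obtain \<epsilon> where eps: "0 < \<epsilon>" "y < ereal (sqrt 3 - \<epsilon>)"
    proof (cases y)
      case (real t)
      then have t: "t < sqrt 3" using y by simp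
      have "0 < (sqrt 3 - t) / 2" "t < sqrt 3 - (sqrt 3 - t) / 2" using t by (simp_all add: field_simps)
      then show ?thesis using that[of "(sqrt 3 - t) / 2"] real by simp
    next
      case PInf then show ?thesis using y by simp
    next
      case MInf then show ?thesis using that[of 1] by simp
    qed
    have E1: "eventually (\<lambda>N. r N < real N / 2) sequentially"
    proof -
      have "eventually (\<lambda>N. r N / real N < 1/2) sequentially"
        using order_tendstoD(2)[OF assms(7), of "1/2"] by simp
      moreover have "eventually (\<lambda>N. 0 < N) sequentially" by (rule eventually_gt_at_top)
      ultimately show ?thesis
        by eventually_elim (simp add: divide_less_eq)
    qed
    obtain N0 :: nat where N0: "288 * (real_of_int d3)^2 / \<epsilon>^2 \<le> real N0"
      using real_arch_simple by blast
    have E2: "eventually (\<lambda>N. 288 * (real_of_int d3)^2 \<le> \<epsilon>^2 * real N) sequentially"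
      using eventually_ge_at_top[of N0]
    proof eventually_elim
      case (elim N)
      then have "288 * (real_of_int d3)^2 / \<epsilon>^2 \<le> real N" using N0 by linarith
      then show ?case using eps(1) by (simp add: divide_le_eq mult.commute)
    qed
    have E3: "eventually (\<lambda>N. real_of_int B \<le> r N) sequentially"
      using assms(6) unfolding filterlim_at_top by blast
    have E4: "eventually (\<lambda>N. 2 * B + 2 * d3 * B + 1 \<le> int N) sequentially"
      using eventually_ge_at_top[of "nat (2 * B + 2 * d3 * B + 1)"] by eventually_elim linarith
    have E5: "eventually (\<lambda>N. 0 < N) sequentially" by (rule eventually_gt_at_top)
    have "eventually (\<lambda>N. sqrt 3 - \<epsilon> \<le> KNr d1 d2 d3 N (r N)) sequentially"
      using E1 E2 E3 E4 E5
    proof eventually_elim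
      case (elim N)
      define MS where "MS = MNr d1 d2 d3 N (r N)"
      define F where "F = (\<lambda>p::int\<times>int\<times>int. real_of_int (conductor3 (fst p) (fst (snd p)) (snd (snd p))))"
      define G where "G = (\<lambda>p::int\<times>int\<times>int. sqrt (real_of_int (fst p * fst (snd p) * snd (snd p))))"
      have K: "KNr d1 d2 d3 N (r N) = sum F MS / sum G MS"
        unfolding KNr_def MS_def F_def G_def by (simp add: case_prod_unfold)
      have fin: "finite MS" unfolding MS_def by (rule MNr_finite)
      have r1: "r N \<le> real N / 2" using elim by simp
      have each: "(sqrt 3 - \<epsilon>) * G p \<le> F p" "0 < G p" if "p \<in> MS" for p
      proof -
        obtain e1 e2 e3 where pe: "p = (e1, e2, e3)" by (cases p) auto
        have mem: "(e1, e2, e3) \<in> MNr d1 d2 d3 N (r N)" using that pe unfolding MS_def by simp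
        show "(sqrt 3 - \<epsilon>) * G p \<le> F p"
          using elem_bound(1)[OF d mem r1 elim(5) eps(1) elim(2)] unfolding pe F_def G_def by simp
        show "0 < G p"
          using elem_bound(2)[OF d mem r1 elim(5) eps(1) elim(2)] unfolding pe G_def by simp
      qed
      define es where "es = (int N * d1 - v, int N * d2 + u, int N * d3)"
      have esm: "es \<in> MS"
      proof -
        have "0 \<le> 2 * d3 * B" using B0 d by simp
        then have "2 * B + 1 \<le> int N" using elim(4) by linarith
        then have N1: "2 * (\<bar>u\<bar> + \<bar>v\<bar>) + 1 \<le> int N" unfolding B_def .
        have "2 * d3 * B < int N" using elim(4) B0 by linarith
        then have N2: "2 * d3 * (\<bar>u\<bar> + \<bar>v\<bar>) < int N" unfolding B_def .
        note es = estar[OF d nd2 nd3 kk uv N1 N2]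
        have "\<bar>u\<bar> \<le> B" "\<bar>v\<bar> \<le> B" unfolding B_def by auto
        then have "real_of_int \<bar>u\<bar> \<le> real_of_int B" "real_of_int \<bar>v\<bar> \<le> real_of_int B" "0 \<le> real_of_int B"
          using B0 by simp_all
        then have "\<bar>real_of_int u\<bar> \<le> r N" "\<bar>real_of_int v\<bar> \<le> r N" "0 \<le> r N"
          using elim(3) by simp_all
        then show ?thesis unfolding es_def MS_def MNr_mem using es by simp
      qed
      have Gpos: "0 < sum G MS"
        by (rule sum_pos2[OF fin esm]) (use each(2) esm in \<open>auto intro: less_imp_le\<close>)
      have "(sqrt 3 - \<epsilon>) * sum G MS = (\<Sum>p\<in>MS. (sqrt 3 - \<epsilon>) * G p)" by (simp add: sum_distrib_left)
      also have "\<dots> \<le> sum F MS" by (rule sum_mono) (use each(1) in auto)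
      finally have "(sqrt 3 - \<epsilon>) * sum G MS \<le> sum F MS" .
      then show ?case unfolding K using Gpos by (simp add: pos_le_divide_eq)
    qed
    then show "eventually (\<lambda>N. y < ereal (KNr d1 d2 d3 N (r N))) sequentially"
    proof eventually_elim
      case (elim N)
      then have "ereal (sqrt 3 - \<epsilon>) \<le> ereal (KNr d1 d2 d3 N (r N))" by simp
      then show ?case using eps(2) by (rule order.strict_trans2[rotated])
    qed
  qed
qed


end
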